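(* Let $\mathcal{X}$ and $\mathcal{Y}$ be closed and bounded intervals of $\mathbb{R}$. Let $\{Z_{ij}\}_{i,j\ge 1}$ be real random quantities with $\mathsf{E}(Z_{ij})=0$ and $\mathsf{E}(Z_{ij}Z_{i'j'})=\delta_{ii'}\delta_{jj'}$ (Kronecker delta). Let $\{g_i\}_{i\ge1}$ be continuous real functions on $\mathcal{X}$ and $\{h_j\}_{j\ge1}$ continuous real functions on $\mathcal{Y}$. For each $n$ define the stochastic process $$F^{(n)}(x,y)=\sum_{i=1}^n\sum_{j=1}^n Z_{ij}\,g_i(x)\,h_j(y),\qquad (x,y)\in\mathcal{X}\times\mathcal{Y}.$$ Let $F=\{F(x,y):(x,y)\in\mathcal{X}\times\mathcal{Y}\}$ be a centred real stochastic process with finite second moments. Suppose either that $F=F^{(n)}$ for some finite $n$, or that $F^{(n)}\to F$ in quadratic mean uniformly on $\mathcal{X}\times\mathcal{Y}$, i.e. $\sup_{(x,y)\in\mathcal{X}\times\mathcal{Y}}\mathsf{E}\{(F^{(n)}(x,y)-F(x,y))^2\}\to 0$ as $n\to\infty$. Then $F$ has a continuous separable covariance function.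
   Context: Random quantities are identified up to equality almost surely, and all are centred (mean zero) with finite second moments. The covariance function of a centred process $F$ on $\mathcal{X}\times\mathcal{Y}$ is $\kappa\{(x,y),(x',y')\}=\mathsf{E}\{F(x,y)F(x',y')\}$. The covariance function is called separable if there exist functions $\kappa_x$ on $\mathcal{X}\times\mathcal{X}$ and $\kappa_y$ on $\mathcal{Y}\times\mathcal{Y}$, each symmetric and non-negative definite, such that $\kappa\{(x,y),(x',y')\}=\kappa_x(x,x')\,\kappa_y(y,y')$ for all $(x,y),(x',y')\in\mathcal{X}\times\mathcal{Y}$. "Continuous separable covariance function" means $\kappa$ is separable and continuous on $(\mathcal{X}\times\mathcal{Y})^2$. *)

theory Defs
  imports "HOL-Probability.Probability"
begin

definition sym_on :: "'a set \<Rightarrow> ('a \<Rightarrow> 'a \<Rightarrow> real) \<Rightarrow> bool" where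
  "sym_on S k \<longleftrightarrow> (\<forall>x\<in>S. \<forall>x'\<in>S. k x x' = k x' x)"

definition nonneg_def_on :: "'a set \<Rightarrow> ('a \<Rightarrow> 'a \<Rightarrow> real) \<Rightarrow> bool" where
  "nonneg_def_on S k \<longleftrightarrow>
     (\<forall>(n::nat) (xs::nat \<Rightarrow> 'a) (c::nat \<Rightarrow> real). (\<forall>i<n. xs i \<in> S) \<longrightarrow>
        0 \<le> (\<Sum>i<n. \<Sum>j<n. c i * c j * k (xs i) (xs j)))"

definition cov_fun :: "'w measure \<Rightarrow> (real \<Rightarrow> real \<Rightarrow> 'w \<Rightarrow> real) \<Rightarrow> (real \<times> real) \<Rightarrow> (real \<times> real) \<Rightarrow> real" where
  "cov_fun M F p q = integral\<^sup>L M (\<lambda>\<omega>. F (fst p) (snd p) \<omega> * F (fst q) (snd q) \<omega>)"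

definition separable_cov_on :: "real set \<Rightarrow> real set \<Rightarrow> ((real \<times> real) \<Rightarrow> (real \<times> real) \<Rightarrow> real) \<Rightarrow> bool" where
  "separable_cov_on X Y \<kappa> \<longleftrightarrow>
     (\<exists>kx ky. sym_on X kx \<and> nonneg_def_on X kx \<and> sym_on Y ky \<and> nonneg_def_on Y ky \<and>
        (\<forall>x\<in>X. \<forall>y\<in>Y. \<forall>x'\<in>X. \<forall>y'\<in>Y. \<kappa> (x, y) (x', y') = kx x x' * ky y y'))"

definition Fn :: "(nat \<Rightarrow> nat \<Rightarrow> 'w \<Rightarrow> real) \<Rightarrow> (nat \<Rightarrow> real \<Rightarrow> real) \<Rightarrow> (nat \<Rightarrow> real \<Rightarrow> real)
                  \<Rightarrow> nat \<Rightarrow> real \<Rightarrow> real \<Rightarrow> 'w \<Rightarrow> real" where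
  "Fn Z g h n x y \<omega> = (\<Sum>i=1..n. \<Sum>j=1..n. Z i j \<omega> * g i x * h j y)"

end

theory Submission
  imports Defs
begin

lemma l2_mult:
  fixes f g :: "'w \<Rightarrow> real"
  assumes [measurable]: "f \<in> borel_measurable M" "g \<in> borel_measurable M"
    and "integrable M (\<lambda>x. (f x)\<^sup>2)" "integrable M (\<lambda>x. (g x)\<^sup>2)"
  shows "integrable M (\<lambda>x. f x * g x)"
proof (rule Bochner_Integration.integrable_bound[where f="\<lambda>x. (f x)\<^sup>2 + (g x)\<^sup>2"])
  show "integrable M (\<lambda>x. (f x)\<^sup>2 + (g x)\<^sup>2)" using assms by auto
  show "AE x in M. norm (f x * g x) \<le> norm ((f x)\<^sup>2 + (g x)\<^sup>2)"
  proof (rule AE_I2)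
    fix x
    have "0 \<le> (\<bar>f x\<bar> - \<bar>g x\<bar>)\<^sup>2" by simp
    hence "2 * \<bar>f x\<bar> * \<bar>g x\<bar> \<le> (f x)\<^sup>2 + (g x)\<^sup>2" by (simp add: power2_eq_square algebra_simps)
    moreover have "0 \<le> \<bar>f x\<bar> * \<bar>g x\<bar>" by simp
    ultimately have "\<bar>f x\<bar> * \<bar>g x\<bar> \<le> (f x)\<^sup>2 + (g x)\<^sup>2" by linarith
    moreover have "norm ((f x)\<^sup>2 + (g x)\<^sup>2) = (f x)\<^sup>2 + (g x)\<^sup>2" by simp
    ultimately show "norm (f x * g x) \<le> norm ((f x)\<^sup>2 + (g x)\<^sup>2)"
      by (simp add: abs_mult)
  qed
qed simp

lemma l2_amgm:
  fixes f g :: "'w \<Rightarrow> real"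
  assumes [measurable]: "f \<in> borel_measurable M" "g \<in> borel_measurable M"
    and "integrable M (\<lambda>x. (f x)\<^sup>2)" "integrable M (\<lambda>x. (g x)\<^sup>2)" and t: "t > 0"
  shows "2 * \<bar>integral\<^sup>L M (\<lambda>x. f x * g x)\<bar> \<le> t * integral\<^sup>L M (\<lambda>x. (f x)\<^sup>2) + (1/t) * integral\<^sup>L M (\<lambda>x. (g x)\<^sup>2)"
proof -
  have i: "integrable M (\<lambda>x. f x * g x)" using l2_mult assms by blast
  have ineq: "2 * \<bar>f x * g x\<bar> \<le> t * (f x)\<^sup>2 + (1/t) * (g x)\<^sup>2" for x
  proof -
    have "0 \<le> (t * \<bar>f x\<bar> - \<bar>g x\<bar>)\<^sup>2" by simp
    hence "2 * t * \<bar>f x\<bar> * \<bar>g x\<bar> \<le> t * (t * (f x)\<^sup>2) + (g x)\<^sup>2"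
      by (simp add: power2_eq_square algebra_simps)
    hence "(2 * \<bar>f x * g x\<bar>) * t \<le> (t * (f x)\<^sup>2 + (1/t) * (g x)\<^sup>2) * t"
      using t by (simp add: abs_mult algebra_simps power2_eq_square)
    thus ?thesis using t by simp
  qed
  have "\<bar>integral\<^sup>L M (\<lambda>x. f x * g x)\<bar> \<le> integral\<^sup>L M (\<lambda>x. \<bar>f x * g x\<bar>)"
    using integral_abs_bound by blast
  also have "\<dots> \<le> integral\<^sup>L M (\<lambda>x. (t * (f x)\<^sup>2 + (1/t) * (g x)\<^sup>2) / 2)"
  proof (rule integral_mono)
    show "integrable M (\<lambda>x. \<bar>f x * g x\<bar>)" using i by auto
    show "integrable M (\<lambda>x. (t * (f x)\<^sup>2 + (1/t) * (g x)\<^sup>2) / 2)" using assms by auto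
    show "\<bar>f x * g x\<bar> \<le> (t * (f x)\<^sup>2 + (1/t) * (g x)\<^sup>2) / 2" for x using ineq[of x] by (linarith | simp add: field_simps | smt (verit))
  qed
  also have "\<dots> = (t * integral\<^sup>L M (\<lambda>x. (f x)\<^sup>2) + (1/t) * integral\<^sup>L M (\<lambda>x. (g x)\<^sup>2)) / 2"
    using assms by simp
  finally show ?thesis by simp
qed

lemma l2_gram:
  fixes f :: "nat \<Rightarrow> 'w \<Rightarrow> real"
  assumes meas: "\<And>i. i < n \<Longrightarrow> f i \<in> borel_measurable M"
    and sq: "\<And>i. i < n \<Longrightarrow> integrable M (\<lambda>x. (f i x)\<^sup>2)"
  shows "0 \<le> (\<Sum>i<n. \<Sum>j<n. c i * c j * integral\<^sup>L M (\<lambda>x. f i x * f j x))"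
proof -
  have int: "integrable M (\<lambda>x. f i x * f j x)" if "i < n" "j < n" for i j
    using l2_mult meas sq that by blast
  have "(\<Sum>i<n. \<Sum>j<n. c i * c j * integral\<^sup>L M (\<lambda>x. f i x * f j x))
      = (\<Sum>i<n. \<Sum>j<n. integral\<^sup>L M (\<lambda>x. c i * c j * (f i x * f j x)))"
    by simp
  also have "\<dots> = (\<Sum>i<n. integral\<^sup>L M (\<lambda>x. \<Sum>j<n. c i * c j * (f i x * f j x)))"
  proof (rule sum.cong[OF refl])
    fix i assume i: "i \<in> {..<n}"
    show "(\<Sum>j<n. integral\<^sup>L M (\<lambda>x. c i * c j * (f i x * f j x))) = integral\<^sup>L M (\<lambda>x. \<Sum>j<n. c i * c j * (f i x * f j x))"
      by (rule Bochner_Integration.integral_sum[where f="\<lambda>j x. c i * c j * (f i x * f j x)", symmetric]) (intro integrable_mult_right int, use i in simp_all)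
  qed
  also have "\<dots> = integral\<^sup>L M (\<lambda>x. \<Sum>i<n. \<Sum>j<n. c i * c j * (f i x * f j x))"
    by (rule Bochner_Integration.integral_sum[where f="\<lambda>i x. \<Sum>j<n. c i * c j * (f i x * f j x)", symmetric]) (rule Bochner_Integration.integrable_sum, rule Bochner_Integration.integrable_mult_right, rule int, auto)
  also have "\<dots> = integral\<^sup>L M (\<lambda>x. (\<Sum>i<n. c i * f i x)\<^sup>2)"
    by (simp add: power2_eq_square sum_product algebra_simps)
  also have "\<dots> \<ge> 0" by simp
  finally show ?thesis .
qed

lemma delta2:
  fixes f :: "nat \<Rightarrow> nat \<Rightarrow> real"
  assumes "finite A" "finite B" "i \<in> A" "j \<in> B"
  shows "(\<Sum>i'\<in>A. \<Sum>j'\<in>B. f i' j' * (if i = i' \<and> j = j' then 1 else 0)) = f i j"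
proof -
  have "(\<Sum>j'\<in>B. f i' j' * (if i = i' \<and> j = j' then 1 else 0)) = (if i = i' then f i' j else 0)" for i'
    using assms by (cases "i = i'") (simp_all add: if_distrib cong: if_cong)
  hence "(\<Sum>i'\<in>A. \<Sum>j'\<in>B. f i' j' * (if i = i' \<and> j = j' then 1 else 0)) = (\<Sum>i'\<in>A. if i = i' then f i' j else 0)"
    by simp
  also have "\<dots> = f i j" using assms by simp
  finally show ?thesis .
qed

lemma Fn_meas:
  assumes Z_meas: "\<And>i j. i \<ge> 1 \<Longrightarrow> j \<ge> 1 \<Longrightarrow> Z i j \<in> borel_measurable M"
  shows "Fn Z g h n x y \<in> borel_measurable M"
proof -
  have "Fn Z g h n x y = (\<lambda>\<omega>. \<Sum>i\<in>{1..n}. \<Sum>j\<in>{1..n}. Z i j \<omega> * g i x * h j y)"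
    by (rule ext) (simp add: Fn_def)
  also have "\<dots> \<in> borel_measurable M"
    by (rule borel_measurable_sum, rule borel_measurable_sum) (use Z_meas in auto)
  finally show ?thesis .
qed

lemma Fn_cov:
  assumes Z_meas: "\<And>i j. i \<ge> 1 \<Longrightarrow> j \<ge> 1 \<Longrightarrow> Z i j \<in> borel_measurable M"
    and Z_sq: "\<And>i j. i \<ge> 1 \<Longrightarrow> j \<ge> 1 \<Longrightarrow> integrable M (\<lambda>\<omega>. (Z i j \<omega>)\<^sup>2)"
    and Z_cov: "\<And>i j i' j'. i \<ge> 1 \<Longrightarrow> j \<ge> 1 \<Longrightarrow> i' \<ge> 1 \<Longrightarrow> j' \<ge> 1 \<Longrightarrow>
       integral\<^sup>L M (\<lambda>\<omega>. Z i j \<omega> * Z i' j' \<omega>) = (if i = i' \<and> j = j' then 1 else 0)"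
  shows "integrable M (\<lambda>\<omega>. Fn Z g h n x y \<omega> * Fn Z g h n x' y' \<omega>)
    \<and> integral\<^sup>L M (\<lambda>\<omega>. Fn Z g h n x y \<omega> * Fn Z g h n x' y' \<omega>)
       = (\<Sum>i=1..n. g i x * g i x') * (\<Sum>j=1..n. h j y * h j y')"
proof -
  define I where "I = {1..n}"
  define C where "C i j i' j' = g i x * h j y * (g i' x' * h j' y')" for i j i' j'
  have e: "Fn Z g h n x y \<omega> * Fn Z g h n x' y' \<omega> =
     (\<Sum>i\<in>I. \<Sum>j\<in>I. \<Sum>i'\<in>I. \<Sum>j'\<in>I. C i j i' j' * (Z i j \<omega> * Z i' j' \<omega>))" for \<omega>
  proof -
    have "Fn Z g h n x y \<omega> * Fn Z g h n x' y' \<omega> =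
      (\<Sum>i\<in>I. \<Sum>j\<in>I. Z i j \<omega> * g i x * h j y) * (\<Sum>i'\<in>I. \<Sum>j'\<in>I. Z i' j' \<omega> * g i' x' * h j' y')"
      by (simp add: Fn_def I_def)
    also have "\<dots> = (\<Sum>i\<in>I. \<Sum>j\<in>I. (Z i j \<omega> * g i x * h j y) * (\<Sum>i'\<in>I. \<Sum>j'\<in>I. Z i' j' \<omega> * g i' x' * h j' y'))"
      by (simp only: sum_distrib_right)
    also have "\<dots> = (\<Sum>i\<in>I. \<Sum>j\<in>I. \<Sum>i'\<in>I. \<Sum>j'\<in>I. (Z i j \<omega> * g i x * h j y) * (Z i' j' \<omega> * g i' x' * h j' y'))"
      by (simp only: sum_distrib_left)
    also have "\<dots> = (\<Sum>i\<in>I. \<Sum>j\<in>I. \<Sum>i'\<in>I. \<Sum>j'\<in>I. C i j i' j' * (Z i j \<omega> * Z i' j' \<omega>))"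
      by (intro sum.cong refl) (simp add: C_def ac_simps)
    finally show ?thesis .
  qed
  have int: "integrable M (\<lambda>\<omega>. C i j i' j' * (Z i j \<omega> * Z i' j' \<omega>))"
    if "i \<in> I" "j \<in> I" "i' \<in> I" "j' \<in> I" for i j i' j'
    using that Z_meas Z_sq l2_mult[of "Z i j" M "Z i' j'"] by (simp add: I_def)
  have int1: "integrable M (\<lambda>\<omega>. \<Sum>i\<in>I. \<Sum>j\<in>I. \<Sum>i'\<in>I. \<Sum>j'\<in>I. C i j i' j' * (Z i j \<omega> * Z i' j' \<omega>))"
    by (intro Bochner_Integration.integrable_sum int)
  have "integral\<^sup>L M (\<lambda>\<omega>. \<Sum>i\<in>I. \<Sum>j\<in>I. \<Sum>i'\<in>I. \<Sum>j'\<in>I. C i j i' j' * (Z i j \<omega> * Z i' j' \<omega>))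
     = (\<Sum>i\<in>I. \<Sum>j\<in>I. \<Sum>i'\<in>I. \<Sum>j'\<in>I. C i j i' j' * integral\<^sup>L M (\<lambda>\<omega>. Z i j \<omega> * Z i' j' \<omega>))"
    using int by (simp add: Bochner_Integration.integrable_sum)
  also have "\<dots> = (\<Sum>i\<in>I. \<Sum>j\<in>I. \<Sum>i'\<in>I. \<Sum>j'\<in>I. C i j i' j' * (if i = i' \<and> j = j' then 1 else 0))"
    by (intro sum.cong refl) (simp add: Z_cov I_def)
  also have "\<dots> = (\<Sum>i\<in>I. \<Sum>j\<in>I. C i j i j)"
    by (intro sum.cong refl) (rule delta2, simp_all add: I_def)
  also have "\<dots> = (\<Sum>i\<in>I. g i x * g i x') * (\<Sum>j\<in>I. h j y * h j y')"
    by (simp add: C_def sum_product ac_simps)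
  finally show ?thesis using int1 by (simp add: e I_def)
qed

lemma l2_sq_bound:
  fixes f g :: "'w \<Rightarrow> real"
  assumes [measurable]: "f \<in> borel_measurable M" "g \<in> borel_measurable M"
    and fi: "integrable M (\<lambda>x. (f x)\<^sup>2)" and gi: "integrable M (\<lambda>x. (g x)\<^sup>2)"
  shows "integrable M (\<lambda>x. (f x - g x)\<^sup>2)"
    and "integral\<^sup>L M (\<lambda>x. (f x)\<^sup>2) \<le> 2 * integral\<^sup>L M (\<lambda>x. (g x)\<^sup>2) + 2 * integral\<^sup>L M (\<lambda>x. (f x - g x)\<^sup>2)"
    and "integral\<^sup>L M (\<lambda>x. (f x - g x)\<^sup>2) = integral\<^sup>L M (\<lambda>x. (g x - f x)\<^sup>2)"
proof -
  have fg: "integrable M (\<lambda>x. f x * g x)" using l2_mult assms by blast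
  have eq: "(\<lambda>x. (f x - g x)\<^sup>2) = (\<lambda>x. (f x)\<^sup>2 + (g x)\<^sup>2 - 2 * (f x * g x))"
    by (rule ext) (simp add: power2_diff)
  show i: "integrable M (\<lambda>x. (f x - g x)\<^sup>2)"
    unfolding eq using fi gi fg by auto
  show "integral\<^sup>L M (\<lambda>x. (f x)\<^sup>2) \<le> 2 * integral\<^sup>L M (\<lambda>x. (g x)\<^sup>2) + 2 * integral\<^sup>L M (\<lambda>x. (f x - g x)\<^sup>2)"
  proof -
    have "integral\<^sup>L M (\<lambda>x. (f x)\<^sup>2) \<le> integral\<^sup>L M (\<lambda>x. 2 * (g x)\<^sup>2 + 2 * (f x - g x)\<^sup>2)"
    proof (rule integral_mono)
      show "integrable M (\<lambda>x. 2 * (g x)\<^sup>2 + 2 * (f x - g x)\<^sup>2)" using gi i by auto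
      fix x
      have "0 \<le> (f x - 2 * g x)\<^sup>2" by simp
      thus "(f x)\<^sup>2 \<le> 2 * (g x)\<^sup>2 + 2 * (f x - g x)\<^sup>2"
        by (simp add: power2_eq_square algebra_simps)
    qed (use fi in auto)
    also have "\<dots> = 2 * integral\<^sup>L M (\<lambda>x. (g x)\<^sup>2) + 2 * integral\<^sup>L M (\<lambda>x. (f x - g x)\<^sup>2)"
      using gi i by simp
    finally show ?thesis .
  qed
  show "integral\<^sup>L M (\<lambda>x. (f x - g x)\<^sup>2) = integral\<^sup>L M (\<lambda>x. (g x - f x)\<^sup>2)"
    by (simp add: power2_commute)
qed

lemma comb:
  fixes A B T X Y :: real
  assumes "2 * \<bar>A\<bar> \<le> T + X" "2 * \<bar>B\<bar> \<le> T + Y"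
  shows "2 * \<bar>- A - B\<bar> \<le> 2 * T + (X + Y)"
proof -
  have "\<bar>- A - B\<bar> \<le> \<bar>A\<bar> + \<bar>B\<bar>" using abs_triangle_ineq[of "-A" "-B"] by simp
  thus ?thesis using assms by (smt (verit))
qed

lemma half_lt:
  fixes u e :: real
  assumes "2 * u \<le> e" "0 < e" shows "u < e"
  using assms by linarith

theorem proposition1:
  fixes M :: "'w measure"
    and a b c d :: real
    and Z :: "nat \<Rightarrow> nat \<Rightarrow> 'w \<Rightarrow> real"
    and g h :: "nat \<Rightarrow> real \<Rightarrow> real"
    and F :: "real \<Rightarrow> real \<Rightarrow> 'w \<Rightarrow> real"
  assumes M: "prob_space M"
    and Z_meas: "\<And>i j. i \<ge> 1 \<Longrightarrow> j \<ge> 1 \<Longrightarrow> Z i j \<in> borel_measurable M"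
    and Z_sq: "\<And>i j. i \<ge> 1 \<Longrightarrow> j \<ge> 1 \<Longrightarrow> integrable M (\<lambda>\<omega>. (Z i j \<omega>)\<^sup>2)"
    and Z_mean: "\<And>i j. i \<ge> 1 \<Longrightarrow> j \<ge> 1 \<Longrightarrow> integral\<^sup>L M (Z i j) = 0"
    and Z_cov: "\<And>i j i' j'. i \<ge> 1 \<Longrightarrow> j \<ge> 1 \<Longrightarrow> i' \<ge> 1 \<Longrightarrow> j' \<ge> 1 \<Longrightarrow>
       integral\<^sup>L M (\<lambda>\<omega>. Z i j \<omega> * Z i' j' \<omega>) = (if i = i' \<and> j = j' then 1 else 0)"
    and g_cont: "\<And>i. i \<ge> 1 \<Longrightarrow> continuous_on {a..b} (g i)"
    and h_cont: "\<And>j. j \<ge> 1 \<Longrightarrow> continuous_on {c..d} (h j)"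
    and F_meas: "\<And>x y. x \<in> {a..b} \<Longrightarrow> y \<in> {c..d} \<Longrightarrow> F x y \<in> borel_measurable M"
    and F_sq: "\<And>x y. x \<in> {a..b} \<Longrightarrow> y \<in> {c..d} \<Longrightarrow> integrable M (\<lambda>\<omega>. (F x y \<omega>)\<^sup>2)"
    and F_mean: "\<And>x y. x \<in> {a..b} \<Longrightarrow> y \<in> {c..d} \<Longrightarrow> integral\<^sup>L M (F x y) = 0"
    and conv: "(\<exists>n. \<forall>x\<in>{a..b}. \<forall>y\<in>{c..d}. AE \<omega> in M. F x y \<omega> = Fn Z g h n x y \<omega>)
       \<or> (\<forall>e>0. \<exists>N. \<forall>n\<ge>N. \<forall>x\<in>{a..b}. \<forall>y\<in>{c..d}.
            integral\<^sup>L M (\<lambda>\<omega>. (Fn Z g h n x y \<omega> - F x y \<omega>)\<^sup>2) \<le> e)"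
  shows "separable_cov_on {a..b} {c..d} (cov_fun M F)
       \<and> continuous_on (({a..b} \<times> {c..d}) \<times> ({a..b} \<times> {c..d})) (\<lambda>(p, q). cov_fun M F p q)"
proof -
  define D where "D = {a..b} \<times> {c..d}"
  define kap where "kap n p q = (\<Sum>i=1..n. g i (fst p) * g i (fst q)) * (\<Sum>j=1..n. h j (snd p) * h j (snd q))"
    for n :: nat and p q :: "real \<times> real"
  define k where "k = cov_fun M F"
  have k_def': "k p q = integral\<^sup>L M (\<lambda>\<omega>. F (fst p) (snd p) \<omega> * F (fst q) (snd q) \<omega>)" for p q
    by (simp add: k_def cov_fun_def)
  have Gm: "Fn Z g h n x y \<in> borel_measurable M" for n x y
    using Fn_meas Z_meas by blast
  have Gc: "integrable M (\<lambda>\<omega>. Fn Z g h n x y \<omega> * Fn Z g h n x' y' \<omega>)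
    \<and> integral\<^sup>L M (\<lambda>\<omega>. Fn Z g h n x y \<omega> * Fn Z g h n x' y' \<omega>) = kap n (x, y) (x', y')" for n x y x' y'
    using Fn_cov[OF Z_meas Z_sq Z_cov, of g h n x y x' y'] by (simp add: kap_def)
  have Gsq: "integrable M (\<lambda>\<omega>. (Fn Z g h n x y \<omega>)\<^sup>2)" for n x y
    using Gc[of n x y x y] by (simp add: power2_eq_square)
  have Gsq_int: "integral\<^sup>L M (\<lambda>\<omega>. (Fn Z g h n x y \<omega>)\<^sup>2) = kap n (x, y) (x, y)" for n x y
    using Gc[of n x y x y] by (simp add: power2_eq_square)
  have Fprod: "integrable M (\<lambda>\<omega>. F x y \<omega> * F x' y' \<omega>)"
    if "x \<in> {a..b}" "y \<in> {c..d}" "x' \<in> {a..b}" "y' \<in> {c..d}" for x y x' y'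
    using l2_mult[of "F x y" M "F x' y'"] F_meas F_sq that by blast
  have Fsq_nonneg: "0 \<le> k p p" for p
    by (simp add: k_def' flip: power2_eq_square)
  have kap_cont: "continuous_on (D \<times> D) (\<lambda>z. kap n (fst z) (snd z))" for n
  proof -
    have gc: "continuous_on (D \<times> D) (\<lambda>z. g i (fst (f z)))" if "i \<ge> 1" "f = fst \<or> f = snd" for i f
      by (rule continuous_on_compose2[OF g_cont[OF that(1)]])
         (use that(2) in \<open>auto intro!: continuous_intros simp: D_def\<close>)
    have hc: "continuous_on (D \<times> D) (\<lambda>z. h i (snd (f z)))" if "i \<ge> 1" "f = fst \<or> f = snd" for i f
      by (rule continuous_on_compose2[OF h_cont[OF that(1)]])
         (use that(2) in \<open>auto intro!: continuous_intros simp: D_def\<close>)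
    show ?thesis unfolding kap_def
      by (intro continuous_on_mult continuous_on_sum ballI)
         (use gc[of _ fst] gc[of _ snd] hc[of _ fst] hc[of _ snd] in auto)
  qed
  have kap_ident: "kap n (x, y) (x', y') * kap n (x0, y0) (x0, y0) = kap n (x, y0) (x', y0) * kap n (x0, y) (x0, y')"
    for n x y x' y' x0 y0
    by (simp add: kap_def mult_ac)
  have key: "(\<exists>n0. \<forall>p\<in>D. \<forall>q\<in>D. k p q = kap n0 p q) \<or>
     uniform_limit (D \<times> D) (\<lambda>n z. kap n (fst z) (snd z)) (\<lambda>z. k (fst z) (snd z)) sequentially"
  proof (cases "\<exists>n. \<forall>x\<in>{a..b}. \<forall>y\<in>{c..d}. AE \<omega> in M. F x y \<omega> = Fn Z g h n x y \<omega>")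
    case True
    then obtain n0 where n0: "\<And>x y. x\<in>{a..b} \<Longrightarrow> y\<in>{c..d} \<Longrightarrow> AE \<omega> in M. F x y \<omega> = Fn Z g h n0 x y \<omega>"
      by blast
    have "k p q = kap n0 p q" if "p \<in> D" "q \<in> D" for p q
    proof -
      obtain x y x' y' where pq: "p = (x, y)" "q = (x', y')" by (cases p, cases q)
      with that have xy: "x \<in> {a..b}" "y \<in> {c..d}" "x' \<in> {a..b}" "y' \<in> {c..d}" by (auto simp: D_def)
      have "k p q = integral\<^sup>L M (\<lambda>\<omega>. F x y \<omega> * F x' y' \<omega>)" by (simp add: k_def' pq)
      also have "\<dots> = integral\<^sup>L M (\<lambda>\<omega>. Fn Z g h n0 x y \<omega> * Fn Z g h n0 x' y' \<omega>)"
      proof (rule integral_cong_AE)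
        show "(\<lambda>\<omega>. F x y \<omega> * F x' y' \<omega>) \<in> borel_measurable M"
          using F_meas xy by measurable
        show "(\<lambda>\<omega>. Fn Z g h n0 x y \<omega> * Fn Z g h n0 x' y' \<omega>) \<in> borel_measurable M"
          using Gm by measurable
        show "AE \<omega> in M. F x y \<omega> * F x' y' \<omega> = Fn Z g h n0 x y \<omega> * Fn Z g h n0 x' y' \<omega>"
          using n0[OF xy(1,2)] n0[OF xy(3,4)] by eventually_elim simp
      qed
      also have "\<dots> = kap n0 p q" using Gc pq by simp
      finally show ?thesis .
    qed
    thus ?thesis by blast
  next
    case False
    with conv have lim: "\<And>e. e > 0 \<Longrightarrow> \<exists>N. \<forall>n\<ge>N. \<forall>x\<in>{a..b}. \<forall>y\<in>{c..d}.
            integral\<^sup>L M (\<lambda>\<omega>. (Fn Z g h n x y \<omega> - F x y \<omega>)\<^sup>2) \<le> e" by blast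
    obtain N1 where N1: "\<And>n x y. n \<ge> N1 \<Longrightarrow> x\<in>{a..b} \<Longrightarrow> y\<in>{c..d} \<Longrightarrow>
            integral\<^sup>L M (\<lambda>\<omega>. (Fn Z g h n x y \<omega> - F x y \<omega>)\<^sup>2) \<le> 1"
      using lim[OF zero_less_one] by blast
    have "compact ((\<lambda>p. kap N1 p p) ` D)"
    proof (rule compact_continuous_image)
      have "continuous_on D (\<lambda>p. (\<lambda>z. kap N1 (fst z) (snd z)) (p, p))"
        by (rule continuous_on_compose2[OF kap_cont[of N1]]) (auto intro!: continuous_intros)
      thus "continuous_on D (\<lambda>p. kap N1 p p)" by simp
      show "compact D" unfolding D_def by (intro compact_Times compact_Icc)
    qed
    then obtain B where B: "\<And>p. p \<in> D \<Longrightarrow> norm (kap N1 p p) \<le> B"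
      using compact_imp_bounded[THEN bounded_iff[THEN iffD1]] by blast
    define K where "K = 2 * max B 0 + 2"
    have Kpos: "0 < K" by (simp add: K_def)
    have Kb: "k p p \<le> K" if "p \<in> D" for p
    proof -
      obtain x y where p: "p = (x, y)" by (cases p)
      with that have xy: "x \<in> {a..b}" "y \<in> {c..d}" by (auto simp: D_def)
      have "k p p = integral\<^sup>L M (\<lambda>\<omega>. (F x y \<omega>)\<^sup>2)" by (simp add: k_def' p power2_eq_square)
      also have "\<dots> \<le> 2 * integral\<^sup>L M (\<lambda>\<omega>. (Fn Z g h N1 x y \<omega>)\<^sup>2)
          + 2 * integral\<^sup>L M (\<lambda>\<omega>. (F x y \<omega> - Fn Z g h N1 x y \<omega>)\<^sup>2)"
        using l2_sq_bound(2)[OF F_meas[OF xy] Gm F_sq[OF xy] Gsq] .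
      also have "\<dots> \<le> 2 * max B 0 + 2 * 1"
        using B[OF that] N1[OF order.refl xy] Gsq_int[of N1 x y]
          l2_sq_bound(3)[OF F_meas[OF xy] Gm F_sq[OF xy] Gsq, of N1 x y] p by auto
      finally show "k p p \<le> K" by (simp add: K_def)
    qed
    have Gb: "kap n (x, y) (x, y) \<le> 2 * K + 2" if "n \<ge> N1" "x \<in> {a..b}" "y \<in> {c..d}" for n x y
    proof -
      have "kap n (x, y) (x, y) = integral\<^sup>L M (\<lambda>\<omega>. (Fn Z g h n x y \<omega>)\<^sup>2)" by (simp add: Gsq_int)
      also have "\<dots> \<le> 2 * integral\<^sup>L M (\<lambda>\<omega>. (F x y \<omega>)\<^sup>2)
          + 2 * integral\<^sup>L M (\<lambda>\<omega>. (Fn Z g h n x y \<omega> - F x y \<omega>)\<^sup>2)"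
        using l2_sq_bound(2)[OF Gm F_meas[OF that(2,3)] Gsq F_sq[OF that(2,3)]] .
      also have "\<dots> \<le> 2 * K + 2 * 1"
        using Kb[of "(x, y)"] N1[OF that] that by (auto simp: D_def k_def' power2_eq_square)
      finally show ?thesis by simp
    qed
    have "uniform_limit (D \<times> D) (\<lambda>n z. kap n (fst z) (snd z)) (\<lambda>z. k (fst z) (snd z)) sequentially"
    proof (rule uniform_limitI)
      fix \<epsilon> :: real assume \<epsilon>: "\<epsilon> > 0"
      define K' where "K' = 3 * K + 2"
      have K': "K' > 0" using Kpos by (simp add: K'_def)
      define t where "t = 2 * K' / \<epsilon>"
      have t: "t > 0" using K' \<epsilon> by (simp add: t_def)
      define e where "e = min 1 (\<epsilon> / (4 * t))"
      have e: "e > 0" "e \<le> 1" "e \<le> \<epsilon> / (4 * t)" using \<epsilon> t by (auto simp: e_def)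
      obtain N where N: "\<And>n x y. n \<ge> N \<Longrightarrow> x\<in>{a..b} \<Longrightarrow> y\<in>{c..d} \<Longrightarrow>
            integral\<^sup>L M (\<lambda>\<omega>. (Fn Z g h n x y \<omega> - F x y \<omega>)\<^sup>2) \<le> e"
        using lim[OF e(1)] by blast
      show "\<forall>\<^sub>F n in sequentially. \<forall>z\<in>D \<times> D. dist (kap n (fst z) (snd z)) (k (fst z) (snd z)) < \<epsilon>"
        unfolding eventually_sequentially
      proof (intro exI[of _ "max N N1"] allI impI ballI)
        fix n z assume n: "max N N1 \<le> n" and z: "z \<in> D \<times> D"
        obtain x y x' y' where zz: "z = ((x, y), (x', y'))" by (metis prod.collapse)
        with z have xy: "x \<in> {a..b}" "y \<in> {c..d}" "x' \<in> {a..b}" "y' \<in> {c..d}" by (auto simp: D_def)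
        define Gp where "Gp = Fn Z g h n x y"
        define Gq where "Gq = Fn Z g h n x' y'"
        define Fp where "Fp = F x y"
        define Fq where "Fq = F x' y'"
        have m: "Gp \<in> borel_measurable M" "Gq \<in> borel_measurable M" "Fp \<in> borel_measurable M" "Fq \<in> borel_measurable M"
          using Gm F_meas xy by (auto simp: Gp_def Gq_def Fp_def Fq_def)
        have sq: "integrable M (\<lambda>\<omega>. (Gp \<omega>)\<^sup>2)" "integrable M (\<lambda>\<omega>. (Gq \<omega>)\<^sup>2)"
            "integrable M (\<lambda>\<omega>. (Fp \<omega>)\<^sup>2)" "integrable M (\<lambda>\<omega>. (Fq \<omega>)\<^sup>2)"
          using Gsq F_sq xy by (auto simp: Gp_def Gq_def Fp_def Fq_def)
        have mu: "(\<lambda>\<omega>. Gp \<omega> - Fp \<omega>) \<in> borel_measurable M" "(\<lambda>\<omega>. Gq \<omega> - Fq \<omega>) \<in> borel_measurable M"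
          using m by auto
        have squ: "integrable M (\<lambda>\<omega>. (Gp \<omega> - Fp \<omega>)\<^sup>2)" "integrable M (\<lambda>\<omega>. (Gq \<omega> - Fq \<omega>)\<^sup>2)"
          using l2_sq_bound(1)[OF m(1) m(3) sq(1) sq(3)] l2_sq_bound(1)[OF m(2) m(4) sq(2) sq(4)] by auto
        have i1: "integrable M (\<lambda>\<omega>. (Gp \<omega> - Fp \<omega>) * Fq \<omega>)" using l2_mult[OF mu(1) m(4) squ(1) sq(4)] .
        have i2: "integrable M (\<lambda>\<omega>. (Gq \<omega> - Fq \<omega>) * Gp \<omega>)" using l2_mult[OF mu(2) m(1) squ(2) sq(1)] .
        have iF: "integrable M (\<lambda>\<omega>. Fp \<omega> * Fq \<omega>)" using l2_mult[OF m(3) m(4) sq(3) sq(4)] .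
        have iG: "integrable M (\<lambda>\<omega>. Gp \<omega> * Gq \<omega>)" using l2_mult[OF m(1) m(2) sq(1) sq(2)] .
        have kz: "k (fst z) (snd z) = integral\<^sup>L M (\<lambda>\<omega>. Fp \<omega> * Fq \<omega>)" by (simp add: zz k_def' Fp_def Fq_def)
        have kapz: "kap n (fst z) (snd z) = integral\<^sup>L M (\<lambda>\<omega>. Gp \<omega> * Gq \<omega>)"
          using Gc[of n x y x' y'] by (simp add: zz Gp_def Gq_def)
        have "k (fst z) (snd z) - kap n (fst z) (snd z) = integral\<^sup>L M (\<lambda>\<omega>. Fp \<omega> * Fq \<omega> - Gp \<omega> * Gq \<omega>)"
          using iF iG kz kapz by (simp add: Bochner_Integration.integral_diff)
        also have "\<dots> = integral\<^sup>L M (\<lambda>\<omega>. - ((Gp \<omega> - Fp \<omega>) * Fq \<omega>) - (Gq \<omega> - Fq \<omega>) * Gp \<omega>)"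
          by (rule Bochner_Integration.integral_cong) (simp_all add: algebra_simps)
        also have "\<dots> = - integral\<^sup>L M (\<lambda>\<omega>. (Gp \<omega> - Fp \<omega>) * Fq \<omega>) - integral\<^sup>L M (\<lambda>\<omega>. (Gq \<omega> - Fq \<omega>) * Gp \<omega>)"
          using i1 i2 by (simp add: Bochner_Integration.integral_diff)
        finally have diff: "k (fst z) (snd z) - kap n (fst z) (snd z) =
           - integral\<^sup>L M (\<lambda>\<omega>. (Gp \<omega> - Fp \<omega>) * Fq \<omega>) - integral\<^sup>L M (\<lambda>\<omega>. (Gq \<omega> - Fq \<omega>) * Gp \<omega>)" .
        have ue1: "integral\<^sup>L M (\<lambda>\<omega>. (Gp \<omega> - Fp \<omega>)\<^sup>2) \<le> e" using N[of n x y] n xy by (simp add: Gp_def Fp_def)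
        have ue2: "integral\<^sup>L M (\<lambda>\<omega>. (Gq \<omega> - Fq \<omega>)\<^sup>2) \<le> e" using N[of n x' y'] n xy by (simp add: Gq_def Fq_def)
        have vF: "integral\<^sup>L M (\<lambda>\<omega>. (Fq \<omega>)\<^sup>2) \<le> K"
          using Kb[of "(x', y')"] xy by (simp add: D_def k_def' Fq_def power2_eq_square)
        have vG: "integral\<^sup>L M (\<lambda>\<omega>. (Gp \<omega>)\<^sup>2) \<le> 2 * K + 2"
          using Gb[of n x y] n xy Gsq_int[of n x y] by (simp add: Gp_def)
        have b1: "2 * \<bar>integral\<^sup>L M (\<lambda>\<omega>. (Gp \<omega> - Fp \<omega>) * Fq \<omega>)\<bar> \<le> t * e + (1/t) * K"
        proof -
          have "2 * \<bar>integral\<^sup>L M (\<lambda>\<omega>. (Gp \<omega> - Fp \<omega>) * Fq \<omega>)\<bar>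
              \<le> t * integral\<^sup>L M (\<lambda>\<omega>. (Gp \<omega> - Fp \<omega>)\<^sup>2) + (1/t) * integral\<^sup>L M (\<lambda>\<omega>. (Fq \<omega>)\<^sup>2)"
            using l2_amgm[OF mu(1) m(4) squ(1) sq(4) t] .
          also have "\<dots> \<le> t * e + (1/t) * K"
            using ue1 vF t by (intro add_mono mult_left_mono) auto
          finally show ?thesis .
        qed
        have b2: "2 * \<bar>integral\<^sup>L M (\<lambda>\<omega>. (Gq \<omega> - Fq \<omega>) * Gp \<omega>)\<bar> \<le> t * e + (1/t) * (2 * K + 2)"
        proof -
          have "2 * \<bar>integral\<^sup>L M (\<lambda>\<omega>. (Gq \<omega> - Fq \<omega>) * Gp \<omega>)\<bar>
              \<le> t * integral\<^sup>L M (\<lambda>\<omega>. (Gq \<omega> - Fq \<omega>)\<^sup>2) + (1/t) * integral\<^sup>L M (\<lambda>\<omega>. (Gp \<omega>)\<^sup>2)"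
            using l2_amgm[OF mu(2) m(1) squ(2) sq(1) t] .
          also have "\<dots> \<le> t * e + (1/t) * (2 * K + 2)"
            using ue2 vG t by (intro add_mono mult_left_mono) auto
          finally show ?thesis .
        qed
        have te: "t * e \<le> \<epsilon> / 4"
        proof -
          have "t * e \<le> t * (\<epsilon> / (4 * t))" using e(3) t by (intro mult_left_mono) auto
          also have "\<dots> = \<epsilon> / 4" using t by simp
          finally show ?thesis .
        qed
        have tK: "(1/t) * K' = \<epsilon> / 2" using K' \<epsilon> by (simp add: t_def)
        have sK: "(1/t) * K + (1/t) * (2 * K + 2) = (1/t) * K'" using t by (simp add: K'_def field_simps)
        have "2 * \<bar>k (fst z) (snd z) - kap n (fst z) (snd z)\<bar> \<le> 2 * (t * e) + ((1/t) * K + (1/t) * (2 * K + 2))"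
          unfolding diff by (rule comb[OF b1 b2])
        hence "2 * \<bar>k (fst z) (snd z) - kap n (fst z) (snd z)\<bar> \<le> 2 * (t * e) + (1/t) * K'"
          by (simp only: sK)
        also have "\<dots> \<le> \<epsilon>" using te tK by linarith
        finally have "\<bar>k (fst z) (snd z) - kap n (fst z) (snd z)\<bar> < \<epsilon>" using \<epsilon> by (rule half_lt)
        thus "dist (kap n (fst z) (snd z)) (k (fst z) (snd z)) < \<epsilon>" by (simp add: dist_real_def abs_minus_commute)
      qed
    qed
    thus ?thesis by blast
  qed
  have cont: "continuous_on (D \<times> D) (\<lambda>z. k (fst z) (snd z))"
  proof (cases "\<exists>n0. \<forall>p\<in>D. \<forall>q\<in>D. k p q = kap n0 p q")
    case True
    then obtain n0 where n0: "\<And>p q. p \<in> D \<Longrightarrow> q \<in> D \<Longrightarrow> k p q = kap n0 p q" by blast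
    show ?thesis
      by (rule continuous_on_eq[OF kap_cont[of n0]]) (auto simp: n0)
  next
    case False
    with key have ul: "uniform_limit (D \<times> D) (\<lambda>n z. kap n (fst z) (snd z)) (\<lambda>z. k (fst z) (snd z)) sequentially"
      by blast
    show ?thesis
      by (rule uniform_limit_theorem[OF _ ul]) (auto simp: kap_cont)
  qed
  have ident: "k (x, y) (x', y') * k (x0, y0) (x0, y0) = k (x, y0) (x', y0) * k (x0, y) (x0, y')"
    if xy: "x \<in> {a..b}" "x' \<in> {a..b}" "x0 \<in> {a..b}" "y \<in> {c..d}" "y' \<in> {c..d}" "y0 \<in> {c..d}"
    for x x' x0 y y' y0
  proof (cases "\<exists>n0. \<forall>p\<in>D. \<forall>q\<in>D. k p q = kap n0 p q")
    case True
    then obtain n0 where n0: "\<And>p q. p \<in> D \<Longrightarrow> q \<in> D \<Longrightarrow> k p q = kap n0 p q" by blast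
    show ?thesis using xy kap_ident[of n0 x y x' y' x0 y0] by (simp add: n0 D_def)
  next
    case False
    with key have ul: "uniform_limit (D \<times> D) (\<lambda>n z. kap n (fst z) (snd z)) (\<lambda>z. k (fst z) (snd z)) sequentially"
      by blast
    have pt: "(\<lambda>n. kap n p q) \<longlonglongrightarrow> k p q" if "p \<in> D" "q \<in> D" for p q
      using tendsto_uniform_limitI[OF ul, of "(p, q)"] that by simp
    have L: "(\<lambda>n. kap n (x, y) (x', y') * kap n (x0, y0) (x0, y0)) \<longlonglongrightarrow> k (x, y) (x', y') * k (x0, y0) (x0, y0)"
      using xy by (intro tendsto_mult pt) (auto simp: D_def)
    have R: "(\<lambda>n. kap n (x, y0) (x', y0) * kap n (x0, y) (x0, y')) \<longlonglongrightarrow> k (x, y0) (x', y0) * k (x0, y) (x0, y')"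
      using xy by (intro tendsto_mult pt) (auto simp: D_def)
    show ?thesis using LIMSEQ_unique[OF L] R by (simp add: kap_ident)
  qed
  have symk: "k p q = k q p" for p q by (simp add: k_def' mult.commute)
  have gram: "0 \<le> (\<Sum>i<n. \<Sum>j<n. c i * c j * k (xs i) (xs j))" if "\<And>i. i < n \<Longrightarrow> xs i \<in> D" for n :: nat and xs :: "nat \<Rightarrow> real \<times> real" and c :: "nat \<Rightarrow> real"
  proof -
    have "0 \<le> (\<Sum>i<n. \<Sum>j<n. c i * c j * integral\<^sup>L M (\<lambda>\<omega>. F (fst (xs i)) (snd (xs i)) \<omega> * F (fst (xs j)) (snd (xs j)) \<omega>))"
      using l2_gram[where f="\<lambda>i. F (fst (xs i)) (snd (xs i))" and n=n and M=M and c=c] that F_meas F_sq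
      by (auto simp: D_def mem_Times_iff)
    thus ?thesis by (simp add: k_def')
  qed
  have sep: "separable_cov_on {a..b} {c..d} k"
  proof (cases "\<exists>p\<in>D. k p p \<noteq> 0")
    case True
    then obtain x0 y0 where p0: "(x0, y0) \<in> D" "k (x0, y0) (x0, y0) \<noteq> 0" by auto
    define L where "L = k (x0, y0) (x0, y0)"
    have Lpos: "L > 0" using p0 Fsq_nonneg[of "(x0, y0)"] by (simp add: L_def)
    have xy0: "x0 \<in> {a..b}" "y0 \<in> {c..d}" using p0 by (auto simp: D_def)
    show ?thesis unfolding separable_cov_on_def
    proof (rule exI[of _ "\<lambda>x x'. k (x, y0) (x', y0) / L"], rule exI[of _ "\<lambda>y y'. k (x0, y) (x0, y')"], intro conjI)
      show "sym_on {a..b} (\<lambda>x x'. k (x, y0) (x', y0) / L)" unfolding sym_on_def using symk by simp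
      show "sym_on {c..d} (\<lambda>y y'. k (x0, y) (x0, y'))" unfolding sym_on_def using symk by simp
      show "nonneg_def_on {a..b} (\<lambda>x x'. k (x, y0) (x', y0) / L)" unfolding nonneg_def_on_def
      proof (intro allI impI)
        fix n :: nat and xs :: "nat \<Rightarrow> real" and cc :: "nat \<Rightarrow> real"
        assume "\<forall>i<n. xs i \<in> {a..b}"
        hence "0 \<le> (\<Sum>i<n. \<Sum>j<n. cc i * cc j * k (xs i, y0) (xs j, y0))"
          using gram[of n "\<lambda>i. (xs i, y0)" cc] xy0 by (auto simp: D_def)
        hence "0 \<le> (\<Sum>i<n. \<Sum>j<n. cc i * cc j * k (xs i, y0) (xs j, y0)) / L" using Lpos by simp
        thus "0 \<le> (\<Sum>i<n. \<Sum>j<n. cc i * cc j * (k (xs i, y0) (xs j, y0) / L))"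
          by (simp add: sum_divide_distrib)
      qed
      show "nonneg_def_on {c..d} (\<lambda>y y'. k (x0, y) (x0, y'))" unfolding nonneg_def_on_def
      proof (intro allI impI)
        fix n :: nat and ys :: "nat \<Rightarrow> real" and cc :: "nat \<Rightarrow> real"
        assume "\<forall>i<n. ys i \<in> {c..d}"
        thus "0 \<le> (\<Sum>i<n. \<Sum>j<n. cc i * cc j * k (x0, ys i) (x0, ys j))"
          using gram[of n "\<lambda>i. (x0, ys i)" cc] xy0 by (auto simp: D_def)
      qed
      show "\<forall>x\<in>{a..b}. \<forall>y\<in>{c..d}. \<forall>x'\<in>{a..b}. \<forall>y'\<in>{c..d}.
          k (x, y) (x', y') = k (x, y0) (x', y0) / L * k (x0, y) (x0, y')"
      proof (intro ballI)
        fix x y x' y' assume "x \<in> {a..b}" "y \<in> {c..d}" "x' \<in> {a..b}" "y' \<in> {c..d}"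
        hence "k (x, y) (x', y') * L = k (x, y0) (x', y0) * k (x0, y) (x0, y')"
          using ident xy0 by (simp add: L_def)
        thus "k (x, y) (x', y') = k (x, y0) (x', y0) / L * k (x0, y) (x0, y')"
          using Lpos by (simp add: field_simps)
      qed
    qed
  next
    case False
    have zero: "k p q = 0" if "p \<in> D" "q \<in> D" for p q
    proof -
      obtain x y x' y' where pq: "p = (x, y)" "q = (x', y')" by (cases p, cases q)
      with that have xy: "x \<in> {a..b}" "y \<in> {c..d}" "x' \<in> {a..b}" "y' \<in> {c..d}" by (auto simp: D_def)
      have "k p p = 0" using False that by auto
      hence "integral\<^sup>L M (\<lambda>\<omega>. (F x y \<omega>)\<^sup>2) = 0" by (simp add: k_def' pq power2_eq_square)
      hence "AE \<omega> in M. (F x y \<omega>)\<^sup>2 = 0"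
        using integral_nonneg_eq_0_iff_AE[OF F_sq[OF xy(1,2)]] by simp
      hence ae: "AE \<omega> in M. F x y \<omega> * F x' y' \<omega> = 0" by eventually_elim simp
      have "k p q = integral\<^sup>L M (\<lambda>\<omega>. F x y \<omega> * F x' y' \<omega>)" by (simp add: k_def' pq)
      also have "\<dots> = integral\<^sup>L M (\<lambda>\<omega>. 0)"
        by (rule integral_cong_AE) (use F_meas xy ae in auto)
      finally show ?thesis by simp
    qed
    show ?thesis unfolding separable_cov_on_def
      by (intro exI[of _ "\<lambda>_ _. 0"]) (auto simp: sym_on_def nonneg_def_on_def zero D_def)
  qed
  have "continuous_on (D \<times> D) (\<lambda>(p, q). k p q)"
    using cont by (simp add: case_prod_unfold)
  thus ?thesis using sep by (simp add: k_def D_def)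
qed

end
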